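(* Fix $r\ge 2$ and integers $k_0,\dots,k_{r-2}\ge 3$. Then there exists a constant $C_{k_0,\dots,k_{r-2}}>0$ such that for all sufficiently large integers $u$, \[ S(r;k_0,\dots,k_{r-2},u) \le C_{k_0,\dots,k_{r-2}}\,\frac{u^{\sum_{i=0}^{r-2}(k_i-2)+1}}{(\log u)^{\sum_{i=0}^{r-2}(k_i-2)}}-1. \] In particular, for fixed integers $3\le s\le t$ there exists a constant $C_{s,t}>0$ such that for all sufficiently large $u$, \[ S(3;s,t,u)\le C_{s,t}\,\frac{u^{s+t-3}}{(\log u)^{s+t-4}}-1. \]
   Context: For an integer $k\ge 3$, let $\mathcal{L}(k)$ denote the equation $x_1+x_2+\cdots+x_{k-1}=x_k$ in positive integer variables (the $x_i$ need not be distinct). For $N\ge1$, write $[1,N]=\{1,2,\dots,N\}$. For integers $r\ge1$ and $k_0,\dots,k_{r-1}\ge 3$, the generalized Schur number $S(r;k_0,\dots,k_{r-1})$ is the least positive integer $N$ such that for every coloring $\Delta:[1,N]\to\{0,1,\dots,r-1\}$ there exist some $i\in\{0,\dots,r-1\}$ and positive integers $x_1,\dots,x_{k_i}\in[1,N]$ satisfying $\mathcal{L}(k_i)$ with $\Delta(x_1)=\cdots=\Delta(x_{k_i})=i$. *)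

theory Defs
  imports Complex_Main
begin

text \<open>Colours are 0..r-1; the list ks = [k_0,...,k_{r-1}] gives the equation lengths.
  A solution of L(k) is x_0,...,x_{k-1} (paper's x_1..x_k) with
  x_0 + ... + x_{k-2} = x_{k-1}.\<close>

definition schur_prop :: "nat list \<Rightarrow> nat \<Rightarrow> bool" where
  "schur_prop ks N \<longleftrightarrow>
     (\<forall>\<Delta> :: nat \<Rightarrow> nat. (\<forall>x\<in>{1..N}. \<Delta> x < length ks) \<longrightarrow>
        (\<exists>i < length ks. \<exists>x :: nat \<Rightarrow> nat.
            (\<forall>j < ks ! i. x j \<in> {1..N} \<and> \<Delta> (x j) = i) \<and>
            (\<Sum>j < ks ! i - 1. x j) = x (ks ! i - 1)))"

definition gen_schur :: "nat list \<Rightarrow> nat" where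
  "gen_schur ks = (LEAST N. N \<ge> 1 \<and> schur_prop ks N)"

end

theory Submission
  imports Defs "HOL-Library.Ramsey"
begin

lemma telescope_nat:
  fixes a :: "nat \<Rightarrow> nat"
  shows "(\<And>j. j < n \<Longrightarrow> a j \<le> a (Suc j)) \<Longrightarrow> a 0 \<le> a n \<and> (\<Sum>j<n. a (Suc j) - a j) = a n - a 0"
proof (induction n)
  case 0
  then show ?case by simp
next
  case (Suc n)
  then have IH: "a 0 \<le> a n \<and> (\<Sum>j<n. a (Suc j) - a j) = a n - a 0" by simp
  have "a n \<le> a (Suc n)" using Suc.prems by simp
  then show ?case using IH by simp
qed

lemma schur_exists:
  assumes ks: "\<forall>k\<in>set ks. k \<ge> 2"
  shows "\<exists>M\<ge>1. schur_prop ks M"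
proof -
  obtain N0 :: nat where N0: "partn_lst {..<N0} ks 2" using ramsey_full[of ks 2] by blast
  define N where "N = max N0 2"
  have N: "partn_lst {..<N} ks 2"
    using partn_lst_greater_resource[OF N0] N_def by simp
  define M where "M = N - 1"
  have M1: "M \<ge> 1" using N_def M_def by simp
  have "schur_prop ks M"
    unfolding schur_prop_def
  proof (intro allI impI)
    fix \<Delta> :: "nat \<Rightarrow> nat"
    assume h\<Delta>: "\<forall>x\<in>{1..M}. \<Delta> x < length ks"
    define f where "f e = \<Delta> (Max e - Min e)" for e :: "nat set"
    have fpi: "f \<in> [{..<N}]\<^bsup>2\<^esup> \<rightarrow> {..<length ks}"
    proof
      fix e assume "e \<in> [{..<N}]\<^bsup>2\<^esup>"
      then obtain x y where e: "e = {x,y}" "x < y" "y < N"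
        unfolding ordered_nsets_2_eq by auto
      then have "Max e = y" "Min e = x" by auto
      moreover have "y - x \<in> {1..M}" using e M_def by auto
      ultimately show "f e \<in> {..<length ks}" using h\<Delta> f_def by auto
    qed
    then obtain i where i: "i < length ks" and mono: "monochromatic {..<N} (ks!i) 2 f i"
      using N unfolding partn_lst_def by blast
    then obtain H where H: "H \<in> nsets {..<N} (ks!i)" and fH: "f ` [H]\<^bsup>2\<^esup> \<subseteq> {i}"
      unfolding monochromatic_def by blast
    define k where "k = ks!i"
    have k2: "k \<ge> 2" using ks i k_def by auto
    have Hfin: "finite H" and Hsub: "H \<subseteq> {..<N}" and Hcard: "card H = k"
      using H k_def unfolding nsets_def by auto
    define xs where "xs = sorted_list_of_set H"
    have xs_len: "length xs = k" using Hcard xs_def by simp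
    have xs_sorted: "sorted_wrt (<) xs" using xs_def by simp
    have xs_set: "set xs = H" using xs_def Hfin by simp
    define a where "a j = xs ! j" for j
    have a_lt: "a p < a q" if "p < q" "q < k" for p q
      using xs_sorted that xs_len a_def by (simp add: sorted_wrt_iff_nth_less)
    have a_N: "a q < N" if "q < k" for q
      using that xs_len xs_set Hsub a_def nth_mem by fastforce
    have a_H: "a q \<in> H" if "q < k" for q
      using that xs_len xs_set a_def nth_mem by fastforce
    have key: "a q - a p \<in> {1..M} \<and> \<Delta> (a q - a p) = i" if "p < q" "q < k" for p q
    proof -
      have lt: "a p < a q" using a_lt that by simp
      have "{a p, a q} \<in> [H]\<^bsup>2\<^esup>" using a_H that lt by simp
      then have "f {a p, a q} \<in> f ` [H]\<^bsup>2\<^esup>" by (rule imageI)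
      then have "f {a p, a q} = i" using fH by blast
      moreover have "Max {a p, a q} = a q" "Min {a p, a q} = a p" using lt by auto
      ultimately have "\<Delta> (a q - a p) = i" using f_def by simp
      moreover have "a q - a p \<in> {1..M}" using lt a_N[OF that(2)] M_def by auto
      ultimately show ?thesis by simp
    qed
    define x where "x j = (if j < k - 1 then a (Suc j) - a j else a (k-1) - a 0)" for j
    have c1: "\<forall>j < ks ! i. x j \<in> {1..M} \<and> \<Delta> (x j) = i"
    proof (intro allI impI)
      fix j assume "j < ks ! i"
      then have j: "j < k" using k_def by simp
      show "x j \<in> {1..M} \<and> \<Delta> (x j) = i"
      proof (cases "j < k - 1")
        case True
        then show ?thesis using key[of j "Suc j"] x_def by simp
      next
        case False
        then show ?thesis using key[of 0 "k-1"] x_def k2 by simp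
      qed
    qed
    have tel: "a 0 \<le> a (k-1) \<and> (\<Sum>j<k-1. a (Suc j) - a j) = a (k-1) - a 0"
      by (rule telescope_nat) (use a_lt in \<open>auto intro: less_imp_le\<close>)
    have "(\<Sum>j<k-1. x j) = (\<Sum>j<k-1. a (Suc j) - a j)"
      by (rule sum.cong) (auto simp: x_def)
    also have "\<dots> = x (k-1)" using tel x_def by simp
    finally have c2: "(\<Sum>j<ks!i - 1. x j) = x (ks!i - 1)" using k_def by simp
    show "\<exists>i<length ks. \<exists>x. (\<forall>j<ks ! i. x j \<in> {1..M} \<and> \<Delta> (x j) = i) \<and>
            (\<Sum>j<ks ! i - 1. x j) = x (ks ! i - 1)"
      using i c1 c2 by blast
  qed
  then show ?thesis using M1 by blast
qed


lemma step_u: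
  assumes S: "schur_prop (ks @ ks) M" and M1: "M \<ge> 1" and u2: "u \<ge> 2"
  shows "schur_prop (ks @ [u]) ((u-1) * M)"
  unfolding schur_prop_def
proof (intro allI impI)
  fix \<Delta> :: "nat \<Rightarrow> nat"
  assume h\<Delta>: "\<forall>x\<in>{1..(u-1)*M}. \<Delta> x < length (ks @ [u])"
  let ?r = "length ks"
  have MuM: "M \<le> (u-1)*M" using mult_le_mono1[of 1 "u-1" M] u2 by linarith
  have inM: "y \<in> {1..(u-1)*M}" if "y \<in> {1..M}" for y
  proof -
    have "y \<le> M" using that by simp
    then have "y \<le> (u-1)*M" using MuM by (rule order_trans)
    then show ?thesis using that by simp
  qed
  show "\<exists>i<length (ks @ [u]). \<exists>x. (\<forall>j<(ks @ [u]) ! i. x j \<in> {1..(u-1)*M} \<and> \<Delta> (x j) = i) \<and>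
          (\<Sum>j<(ks @ [u]) ! i - 1. x j) = x ((ks @ [u]) ! i - 1)"
  proof (cases "\<exists>y\<in>{1..M}. \<Delta> y = ?r \<and> \<Delta> ((u-1)*y) = ?r")
    case True
    then obtain y where y: "y \<in> {1..M}" "\<Delta> y = ?r" "\<Delta> ((u-1)*y) = ?r" by blast
    define x where "x j = (if j < u - 1 then y else (u-1)*y)" for j
    have nth: "(ks @ [u]) ! ?r = u" by simp
    have c1: "\<forall>j<(ks @ [u]) ! ?r. x j \<in> {1..(u-1)*M} \<and> \<Delta> (x j) = ?r"
    proof (intro allI impI)
      fix j assume "j < (ks @ [u]) ! ?r"
      have yM0: "y \<le> M" using y(1) by simp
      have yM: "y \<le> (u-1)*M" using order_trans[OF yM0 MuM] .
      have y2: "(u-1)*y \<le> (u-1)*M" using y(1) by auto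
      have y3: "1 \<le> (u-1)*y" using y(1) u2 by auto
      show "x j \<in> {1..(u-1)*M} \<and> \<Delta> (x j) = ?r"
        using y yM y2 y3 by (auto simp: x_def)
    qed
    have c2: "(\<Sum>j<(ks @ [u]) ! ?r - 1. x j) = x ((ks @ [u]) ! ?r - 1)"
      by (simp add: nth x_def)
    have "?r < length (ks @ [u])" by simp
    then show ?thesis using c1 c2 by blast
  next
    case False
    define \<Gamma> where "\<Gamma> y = (if \<Delta> y < ?r then \<Delta> y else ?r + \<Delta> ((u-1)*y))" for y
    have \<Gamma>lt: "\<forall>y\<in>{1..M}. \<Gamma> y < length (ks @ ks)"
    proof
      fix y assume y: "y \<in> {1..M}"
      then have "y \<in> {1..(u-1)*M}" by (rule inM)
      then have d1: "\<Delta> y \<le> ?r" using h\<Delta> by fastforce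
      have "(u-1)*y \<in> {1..(u-1)*M}" using y u2 by auto
      then have d2: "\<Delta> ((u-1)*y) \<le> ?r" using h\<Delta> by fastforce
      show "\<Gamma> y < length (ks @ ks)"
      proof (cases "\<Delta> y < ?r")
        case True then show ?thesis by (simp add: \<Gamma>_def)
      next
        case F: False
        then have "\<Delta> y = ?r" using d1 by simp
        then have "\<Delta> ((u-1)*y) \<noteq> ?r" using False y by blast
        then show ?thesis using F d2 by (simp add: \<Gamma>_def)
      qed
    qed
    then obtain i x where i: "i < length (ks @ ks)"
      and xs: "\<forall>j<(ks @ ks) ! i. x j \<in> {1..M} \<and> \<Gamma> (x j) = i"
      and sx: "(\<Sum>j<(ks @ ks) ! i - 1. x j) = x ((ks @ ks) ! i - 1)"
      using S unfolding schur_prop_def by blast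
    show ?thesis
    proof (cases "i < ?r")
      case True
      have e: "(ks @ [u]) ! i = (ks @ ks) ! i" using True by (simp add: nth_append)
      have c1: "\<forall>j<(ks @ [u]) ! i. x j \<in> {1..(u-1)*M} \<and> \<Delta> (x j) = i"
      proof (intro allI impI)
        fix j assume "j < (ks @ [u]) ! i"
        then have xj: "x j \<in> {1..M}" "\<Gamma> (x j) = i" using xs e by auto
        then have "\<Delta> (x j) = i" using True by (auto simp: \<Gamma>_def split: if_splits)
        then show "x j \<in> {1..(u-1)*M} \<and> \<Delta> (x j) = i" using inM[OF xj(1)] by auto
      qed
      show ?thesis
        by (rule exI[of _ i]) (use True c1 sx e in auto)
    next
      case False
      define i' where "i' = i - ?r"
      have i': "i' < ?r" using i False i'_def by simp
      have e: "(ks @ [u]) ! i' = (ks @ ks) ! i" using False i' i'_def by (simp add: nth_append)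
      define z where "z j = (u-1) * x j" for j
      have c1: "\<forall>j<(ks @ [u]) ! i'. z j \<in> {1..(u-1)*M} \<and> \<Delta> (z j) = i'"
      proof (intro allI impI)
        fix j assume "j < (ks @ [u]) ! i'"
        then have xj: "x j \<in> {1..M}" "\<Gamma> (x j) = i" using xs e by auto
        then have "\<Delta> ((u-1) * x j) = i'" using False i'_def by (auto simp: \<Gamma>_def split: if_splits)
        moreover have "z j \<in> {1..(u-1)*M}" using xj u2 by (auto simp: z_def)
        ultimately show "z j \<in> {1..(u-1)*M} \<and> \<Delta> (z j) = i'" by (simp add: z_def)
      qed
      have c2: "(\<Sum>j<(ks @ [u]) ! i' - 1. z j) = z ((ks @ [u]) ! i' - 1)"
        using sx e by (simp add: z_def sum_distrib_left[symmetric])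
      show ?thesis
        by (rule exI[of _ i']) (use i' c1 c2 in auto)
    qed
  qed
qed

lemma linear_bound:
  assumes ks: "\<forall>k\<in>set ks. k \<ge> 2"
  shows "\<exists>M\<ge>1. \<forall>u\<ge>2. gen_schur (ks @ [u]) \<le> (u-1) * M"
proof -
  have "\<forall>k\<in>set (ks @ ks). k \<ge> 2" using ks by auto
  then obtain M where M: "M \<ge> 1" "schur_prop (ks @ ks) M" using schur_exists by blast
  have "gen_schur (ks @ [u]) \<le> (u-1) * M" if u: "u \<ge> 2" for u
  proof -
    have "(u-1) * M \<ge> 1 \<and> schur_prop (ks @ [u]) ((u-1) * M)"
      using step_u[OF M(2) M(1) u] M(1) u by simp
    then show ?thesis unfolding gen_schur_def by (rule Least_le)
  qed
  then show ?thesis using M(1) by blast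
qed

lemma real_bound:
  fixes u :: nat and e :: nat and M :: nat
  assumes u: "u \<ge> 2" and g: "G \<le> (u-1) * M"
  shows "real G \<le> real (M+1) * real u ^ (e + 1) / ln (real u) ^ e - 1"
proof -
  have lnpos: "ln (real u) > 0" using u by simp
  have lnle: "ln (real u) \<le> real u" using ln_le_minus_one[of "real u"] u by simp
  have pw: "ln (real u) ^ e \<le> real u ^ e" using lnpos lnle by (simp add: power_mono)
  have ppos: "ln (real u) ^ e > 0" using lnpos by simp
  have "real u = real u ^ (e+1) / real u ^ e" using u by simp
  also have "\<dots> \<le> real u ^ (e+1) / ln (real u) ^ e"
    by (rule divide_left_mono) (use pw ppos u in auto)
  finally have X: "real u \<le> real u ^ (e+1) / ln (real u) ^ e" .
  have "real G \<le> real ((u-1) * M)" using g of_nat_mono by blast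
  also have "\<dots> \<le> real (M+1) * real u - 1" using u by (simp add: of_nat_diff algebra_simps)
  also have "\<dots> \<le> real (M+1) * (real u ^ (e+1) / ln (real u) ^ e) - 1"
    using mult_left_mono[OF X, of "real (M+1)"] by simp
  finally show ?thesis by (simp add: times_divide_eq_right)
qed

theorem corollary2:
  shows "(\<forall>ks :: nat list. ks \<noteq> [] \<longrightarrow> (\<forall>k\<in>set ks. k \<ge> 3) \<longrightarrow>
           (\<exists>C :: real. C > 0 \<and>
              (\<forall>\<^sub>F u in at_top.
                 real (gen_schur (ks @ [u])) \<le>
                   C * real u ^ (sum_list (map (\<lambda>k. k - 2) ks) + 1)
                     / ln (real u) ^ sum_list (map (\<lambda>k. k - 2) ks) - 1)))
       \<and> (\<forall>s t :: nat. 3 \<le> s \<longrightarrow> s \<le> t \<longrightarrow>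
           (\<exists>C :: real. C > 0 \<and>
              (\<forall>\<^sub>F u in at_top.
                 real (gen_schur [s, t, u]) \<le>
                   C * real u ^ (s + t - 3) / ln (real u) ^ (s + t - 4) - 1)))"
proof (intro conjI allI impI)
  fix ks :: "nat list"
  assume "\<forall>k\<in>set ks. k \<ge> 3"
  then have "\<forall>k\<in>set ks. k \<ge> 2" by auto
  then obtain M where M: "M \<ge> 1" "\<forall>u\<ge>2. gen_schur (ks @ [u]) \<le> (u-1) * M"
    using linear_bound by blast
  show "\<exists>C :: real. C > 0 \<and>
              (\<forall>\<^sub>F u in at_top.
                 real (gen_schur (ks @ [u])) \<le>
                   C * real u ^ (sum_list (map (\<lambda>k. k - 2) ks) + 1)
                     / ln (real u) ^ sum_list (map (\<lambda>k. k - 2) ks) - 1)"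
  proof (intro exI conjI)
    show "real (M+1) > 0" by simp
    show "\<forall>\<^sub>F u in at_top. real (gen_schur (ks @ [u])) \<le>
            real (M+1) * real u ^ (sum_list (map (\<lambda>k. k - 2) ks) + 1)
              / ln (real u) ^ sum_list (map (\<lambda>k. k - 2) ks) - 1"
      unfolding eventually_at_top_linorder
      using M(2) real_bound by blast
  qed
next
  fix s t :: nat
  assume st: "3 \<le> s" "s \<le> t"
  have "\<forall>k\<in>set [s,t]. k \<ge> 2" using st by auto
  then obtain M where M: "M \<ge> 1" "\<forall>u\<ge>2. gen_schur ([s,t] @ [u]) \<le> (u-1) * M"
    using linear_bound by blast
  have ex: "s + t - 3 = (s + t - 4) + 1" using st by simp
  show "\<exists>C :: real. C > 0 \<and>
              (\<forall>\<^sub>F u in at_top.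
                 real (gen_schur [s, t, u]) \<le>
                   C * real u ^ (s + t - 3) / ln (real u) ^ (s + t - 4) - 1)"
  proof (intro exI conjI)
    show "real (M+1) > 0" by simp
    show "\<forall>\<^sub>F u in at_top. real (gen_schur [s, t, u]) \<le>
            real (M+1) * real u ^ (s + t - 3) / ln (real u) ^ (s + t - 4) - 1"
      unfolding eventually_at_top_linorder ex
      using M(2) real_bound by (metis append_Cons append_Nil)
  qed
qed

end
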